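(* Let $h:J\to\mathbb{R}$ be a non-negative function, where $J\subseteq\mathbb{R}$ is an interval with $[0,1]\subseteq J$, and assume $h$ is Lebesgue integrable on $[0,1]$. Let $I\subset[0,\infty)$ be an open interval, let $a,b\in I$ with $a<b$, and let $f:I\to\mathbb{R}$ be three times differentiable on $I$ with $f'''\in L_1[a,b]$. If $|f'''|$ is $h$-convex on $[a,b]$, then $$\left|\int_a^b f(x)\,dx-\frac{b-a}{6}\left[f(a)+4f\left(\frac{a+b}{2}\right)+f(b)\right]\right|\le \frac{(b-a)^4}{6}\left[\int_0^{1/2}t^2\left(\tfrac12-t\right)h(t)\,dt+\int_0^{1/2}t^2\left(\tfrac12-t\right)h(1-t)\,dt\right]\bigl[|f'''(a)|+|f'''(b)|\bigr].$$
   Context: Given a non-negative function $h$ defined on an interval containing $[0,1]$, a function $g:[a,b]\to\mathbb{R}$ is called $h$-convex on $[a,b]$ if $g$ is non-negative and for all $x,y\in[a,b]$ and $t\in[0,1]$, $$g(tx+(1-t)y)\le h(t)\,g(x)+h(1-t)\,g(y).$$ *)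

theory Defs
  imports "HOL-Analysis.Analysis"
begin

definition h_convex_on :: "(real \<Rightarrow> real) \<Rightarrow> real \<Rightarrow> real \<Rightarrow> (real \<Rightarrow> real) \<Rightarrow> bool" where
  "h_convex_on h a b g \<longleftrightarrow>
     (\<forall>x\<in>{a..b}. 0 \<le> g x) \<and>
     (\<forall>x\<in>{a..b}. \<forall>y\<in>{a..b}. \<forall>t\<in>{0..1}.
        g (t * x + (1 - t) * y) \<le> h t * g x + h (1 - t) * g y)"

end

theory Submission imports Defs begin

lemma chain_aff:
  fixes g :: "real \<Rightarrow> real"
  assumes "(g has_real_derivative D) (at (c + t*M))"
  shows "((\<lambda>t. g (c + t*M)) has_real_derivative D * M) (at t within S)"
proof -
  have "((\<lambda>t. c + t*M) has_real_derivative M) (at t)"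
    by (auto intro!: derivative_eq_intros)
  from DERIV_chain2[OF assms this] show ?thesis
    by (rule has_field_derivative_at_within)
qed

lemma chain_aff_within:
  fixes g :: "real \<Rightarrow> real"
  assumes "(g has_real_derivative D) (at (c + t*M) within T)"
    and "(\<lambda>t. c + t*M) ` S \<subseteq> T"
  shows "((\<lambda>t. g (c + t*M)) has_real_derivative D * M) (at t within S)"
proof -
  have "((\<lambda>t. c + t*M) has_real_derivative M) (at t within S)"
    by (auto intro!: derivative_eq_intros)
  moreover have "(g has_real_derivative D) (at ((\<lambda>t. c + t*M) t) within ((\<lambda>t. c + t*M) ` S))"
    using DERIV_subset[OF assms] by simp
  ultimately show ?thesis using DERIV_image_chain by (simp add: o_def)
qed

lemma refl_int:
  fixes h :: "real \<Rightarrow> real"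
  assumes "h integrable_on {0..1}"
  shows "(\<lambda>t. h (1 - t)) integrable_on {0..1}"
proof -
  have "(\<lambda>x. h ((-1) *\<^sub>R x + 1)) integrable_on ((\<lambda>x. (1 / -1) *\<^sub>R x + -((1 / -1) *\<^sub>R 1)) ` cbox 0 1)"
    using integrable_affinity[of h 0 1 "-1" 1] assms by simp
  moreover have "((\<lambda>x. (1 / -1) *\<^sub>R x + -((1 / -1) *\<^sub>R 1)) ` cbox 0 (1::real)) = {0..1}"
    by (auto intro!: image_eqI[where x="1 - _"])
  ultimately show ?thesis by simp
qed

lemma prod_int:
  fixes g :: "real \<Rightarrow> real"
  assumes "g absolutely_integrable_on {0..1/2}"
  shows "(\<lambda>t. t\<^sup>2 * (1/2 - t) * g t) integrable_on {0..1/2}"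
proof -
  have "(\<lambda>t. (t\<^sup>2 * (1/2 - t)) * g t) absolutely_integrable_on {0..1/2}"
  proof (rule absolutely_integrable_bounded_measurable_product_real[OF _ _ _ assms])
    show "(\<lambda>t::real. t\<^sup>2 * (1/2 - t)) \<in> borel_measurable (lebesgue_on {0..1/2})"
      by (rule continuous_imp_measurable_on_sets_lebesgue) (auto intro!: continuous_intros)
    show "{0..1/2::real} \<in> sets lebesgue" by simp
    show "bounded ((\<lambda>t::real. t\<^sup>2 * (1/2 - t)) ` {0..1/2})"
      by (intro compact_imp_bounded compact_continuous_image) (auto intro!: continuous_intros)
  qed
  then show ?thesis using absolutely_integrable_on_def by blast
qed


theorem theorem1:
  fixes h :: "real \<Rightarrow> real" and J :: "real set"
    and f f1 f2 f3 :: "real \<Rightarrow> real" and I :: "real set" and a b :: real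
  assumes J_int: "is_interval J" and J_sub: "{0..1} \<subseteq> J"
    and h_nonneg: "\<forall>t\<in>J. 0 \<le> h t"
    and h_int: "h absolutely_integrable_on {0..1}"
    and I_open: "open I" and I_int: "is_interval I" and I_pos: "I \<subseteq> {0..}"
    and ab: "a \<in> I" "b \<in> I" "a < b"
    and d1: "\<forall>x\<in>I. (f has_real_derivative f1 x) (at x)"
    and d2: "\<forall>x\<in>I. (f1 has_real_derivative f2 x) (at x)"
    and d3: "\<forall>x\<in>I. (f2 has_real_derivative f3 x) (at x)"
    and f3_L1: "f3 absolutely_integrable_on {a..b}"
    and hconv: "h_convex_on h a b (\<lambda>x. \<bar>f3 x\<bar>)"
  shows "\<bar>integral {a..b} f - (b - a) / 6 * (f a + 4 * f ((a + b) / 2) + f b)\<bar>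
    \<le> (b - a) ^ 4 / 6 *
       (integral {0..1/2} (\<lambda>t. t\<^sup>2 * (1/2 - t) * h t)
        + integral {0..1/2} (\<lambda>t. t\<^sup>2 * (1/2 - t) * h (1 - t)))
       * (\<bar>f3 a\<bar> + \<bar>f3 b\<bar>)"
proof -
  define L where "L = b - a"
  have L0: "L > 0" using ab unfolding L_def by simp
  have abI: "{a..b} \<subseteq> I"
  proof
    fix x assume "x \<in> {a..b}"
    then show "x \<in> I" using mem_is_interval_1_I[OF I_int ab(1,2)] by auto
  qed
  have fcont: "continuous_on {a..b} f"
  proof (rule continuous_at_imp_continuous_on, rule ballI)
    fix x assume "x \<in> {a..b}"
    then have "x \<in> I" using abI by auto
    then show "isCont f x" using d1 DERIV_isCont by blast
  qed
  define F where "F x = integral {a..x} f" for x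
  have dF: "(F has_real_derivative f x) (at x within {a..b})" if "x \<in> {a..b}" for x
    unfolding F_def using integral_has_real_derivative[OF fcont that] .
  define k :: "real \<Rightarrow> real" where "k t = t^2/2 - t^3" for t
  define k1 :: "real \<Rightarrow> real" where "k1 t = t - 3*t^2" for t
  define k2 :: "real \<Rightarrow> real" where "k2 t = 1 - 6*t" for t
  have dk: "(k has_real_derivative k1 t) (at t within S)" for t S
    unfolding k_def k1_def by (auto intro!: derivative_eq_intros simp: power2_eq_square)
  have dk1: "(k1 has_real_derivative k2 t) (at t within S)" for t S
    unfolding k1_def k2_def by (auto intro!: derivative_eq_intros simp: power2_eq_square)
  have dk2: "(k2 has_real_derivative -6) (at t within S)" for t S
    unfolding k2_def by (auto intro!: derivative_eq_intros)
  define GL where "GL t = k t * L^2 * f2 (a + t*L) - k1 t * L * f1 (a + t*L) + k2 t * f (a + t*L)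
      + 6 * F (a + t*L) / L" for t
  have xin: "a + t*L \<in> {a..b}" if "t \<in> {0..1/2}" for t
  proof -
    have "0 \<le> t*L" using that L0 by simp
    moreover have "t*L \<le> 1*L" using that L0 by (intro mult_right_mono) auto
    ultimately show ?thesis unfolding L_def by auto
  qed
  have imgL: "(\<lambda>t. a + t*L) ` {0..1/2} \<subseteq> {a..b}" using xin by auto
  have dGL: "(GL has_real_derivative k t * L^3 * f3 (a + t*L)) (at t within {0..1/2})"
    if t: "t \<in> {0..1/2}" for t
  proof -
    have xI: "a + t*L \<in> I" using xin[OF t] abI by auto
    have e1: "((\<lambda>t. f2 (a + t*L)) has_real_derivative f3 (a+t*L) * L) (at t within {0..1/2})"
      by (rule chain_aff) (use d3 xI in auto)
    have e2: "((\<lambda>t. f1 (a + t*L)) has_real_derivative f2 (a+t*L) * L) (at t within {0..1/2})"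
      by (rule chain_aff) (use d2 xI in auto)
    have e3: "((\<lambda>t. f (a + t*L)) has_real_derivative f1 (a+t*L) * L) (at t within {0..1/2})"
      by (rule chain_aff) (use d1 xI in auto)
    have e4: "((\<lambda>t. F (a + t*L)) has_real_derivative f (a+t*L) * L) (at t within {0..1/2})"
      by (rule chain_aff_within[OF dF[OF xin[OF t]] imgL])
    note A = DERIV_mult[OF DERIV_mult[OF dk DERIV_const] e1]
    note B = DERIV_mult[OF DERIV_mult[OF dk1 DERIV_const] e2]
    note C = DERIV_mult[OF dk2 e3]
    note D = DERIV_cdivide[OF DERIV_cmult[OF e4]]
    note ALL = DERIV_add[OF DERIV_add[OF DERIV_diff[OF A B] C] D]
    show ?thesis unfolding GL_def
      by (rule DERIV_cong[OF ALL]) (use L0 in \<open>simp add: field_simps power2_eq_square power3_eq_cube\<close>)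
  qed
  have intL: "((\<lambda>t. k t * L^3 * f3 (a + t*L)) has_integral (GL (1/2) - GL 0)) {0..1/2}"
    by (rule fundamental_theorem_of_calculus) (auto simp: has_real_derivative_iff_has_vector_derivative[symmetric] intro!: dGL)
  define GR where "GR t = k t * L^2 * f2 (b + t*(-L)) + k1 t * L * f1 (b + t*(-L)) + k2 t * f (b + t*(-L))
      - 6 * F (b + t*(-L)) / L" for t
  have yin: "b + t*(-L) \<in> {a..b}" if "t \<in> {0..1/2}" for t
  proof -
    have "0 \<le> t*L" using that L0 by simp
    moreover have "t*L \<le> 1*L" using that L0 by (intro mult_right_mono) auto
    ultimately have "a \<le> b - t*L \<and> b - t*L \<le> b" unfolding L_def mult_1 by linarith
    then show ?thesis by simp
  qed
  have imgR: "(\<lambda>t. b + t*(-L)) ` {0..1/2} \<subseteq> {a..b}" using yin by auto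
  have dGR: "(GR has_real_derivative -(k t * L^3 * f3 (b + t*(-L)))) (at t within {0..1/2})"
    if t: "t \<in> {0..1/2}" for t
  proof -
    have xI: "b + t*(-L) \<in> I" using yin[OF t] abI by auto
    have e1: "((\<lambda>t. f2 (b + t*(-L))) has_real_derivative f3 (b + t*(-L)) * (-L)) (at t within {0..1/2})"
      by (rule chain_aff) (use d3 xI in auto)
    have e2: "((\<lambda>t. f1 (b + t*(-L))) has_real_derivative f2 (b + t*(-L)) * (-L)) (at t within {0..1/2})"
      by (rule chain_aff) (use d2 xI in auto)
    have e3: "((\<lambda>t. f (b + t*(-L))) has_real_derivative f1 (b + t*(-L)) * (-L)) (at t within {0..1/2})"
      by (rule chain_aff) (use d1 xI in auto)
    have e4: "((\<lambda>t. F (b + t*(-L))) has_real_derivative f (b + t*(-L)) * (-L)) (at t within {0..1/2})"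
      by (rule chain_aff_within[OF dF[OF yin[OF t]] imgR])
    note A = DERIV_mult[OF DERIV_mult[OF dk DERIV_const] e1]
    note B = DERIV_mult[OF DERIV_mult[OF dk1 DERIV_const] e2]
    note C = DERIV_mult[OF dk2 e3]
    note D = DERIV_cdivide[OF DERIV_cmult[OF e4]]
    note ALL = DERIV_diff[OF DERIV_add[OF DERIV_add[OF A B] C] D]
    show ?thesis unfolding GR_def
      by (rule DERIV_cong[OF ALL]) (use L0 in \<open>simp add: field_simps power2_eq_square power3_eq_cube\<close>)
  qed
  have intR: "((\<lambda>t. -(k t * L^3 * f3 (b + t*(-L)))) has_integral (GR (1/2) - GR 0)) {0..1/2}"
    by (rule fundamental_theorem_of_calculus) (use dGR in \<open>auto simp: has_real_derivative_iff_has_vector_derivative[symmetric]\<close>)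
  define A where "A = \<bar>f3 a\<bar>"
  define B where "B = \<bar>f3 b\<bar>"
  define g1 where "g1 t = t\<^sup>2 * (1/2 - t) * h t" for t
  define g2 where "g2 t = t\<^sup>2 * (1/2 - t) * h (1 - t)" for t
  define I1 where "I1 = integral {0..1/2} g1"
  define I2 where "I2 = integral {0..1/2} g2"
  have hsub: "h absolutely_integrable_on {0..1/2}"
    by (rule absolutely_integrable_on_subinterval[OF h_int]) auto
  have h1int: "(\<lambda>t. h (1 - t)) integrable_on {0..1}"
    by (rule refl_int) (use h_int absolutely_integrable_on_def in blast)
  have h1abs: "(\<lambda>t. h (1 - t)) absolutely_integrable_on {0..1}"
    by (rule nonnegative_absolutely_integrable_1[OF h1int]) (use h_nonneg J_sub in \<open>auto simp: subset_iff\<close>)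
  have h1sub: "(\<lambda>t. h (1 - t)) absolutely_integrable_on {0..1/2}"
    by (rule absolutely_integrable_on_subinterval[OF h1abs]) auto
  have g1i: "(g1 has_integral I1) {0..1/2}"
    unfolding I1_def g1_def using prod_int[OF hsub] by (simp add: integrable_integral)
  have g2i: "(g2 has_integral I2) {0..1/2}"
    unfolding I2_def g2_def using prod_int[OF h1sub] by (simp add: integrable_integral)
  have comb1: "((\<lambda>t. B * g1 t + A * g2 t) has_integral (B * I1 + A * I2)) {0..1/2}"
    by (intro has_integral_add has_integral_mult_right g1i g2i)
  have comb2: "((\<lambda>t. B * g2 t + A * g1 t) has_integral (B * I2 + A * I1)) {0..1/2}"
    by (intro has_integral_add has_integral_mult_right g1i g2i)
  have hc: "\<bar>f3 (t * x + (1 - t) * y)\<bar> \<le> h t * \<bar>f3 x\<bar> + h (1 - t) * \<bar>f3 y\<bar>"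
    if "x \<in> {a..b}" "y \<in> {a..b}" "t \<in> {0..1}" for x y t
    using hconv that unfolding h_convex_on_def by blast
  have abin: "a \<in> {a..b}" "b \<in> {a..b}" using ab by auto
  have kk: "k t = t\<^sup>2 * (1/2 - t)" for t unfolding k_def by (simp add: algebra_simps power2_eq_square power3_eq_cube)
  have knn: "0 \<le> k t" if "t \<in> {0..1/2}" for t using that unfolding kk by auto
  define IL where "IL = integral {0..1/2} (\<lambda>t. k t * f3 (a + t*L))"
  define IR where "IR = integral {0..1/2} (\<lambda>t. k t * f3 (b + t*(-L)))"
  have hIL: "((\<lambda>t. k t * f3 (a + t*L)) has_integral ((1/L^3) * (GL (1/2) - GL 0))) {0..1/2}"
  proof -
    have "(\<lambda>t. k t * f3 (a + t*L)) = (\<lambda>t. (1/L^3) * (k t * L^3 * f3 (a + t*L)))"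
      using L0 by (auto simp: fun_eq_iff)
    then show ?thesis using has_integral_mult_right[OF intL, of "1/L^3"] by simp
  qed
  have hIR: "((\<lambda>t. k t * f3 (b + t*(-L))) has_integral ((-1/L^3) * (GR (1/2) - GR 0))) {0..1/2}"
  proof -
    have "(\<lambda>t. k t * f3 (b + t*(-L))) = (\<lambda>t. (-1/L^3) * (-(k t * L^3 * f3 (b + t*(-L)))))"
      using L0 by (auto simp: fun_eq_iff)
    then show ?thesis using has_integral_mult_right[OF intR, of "-1/L^3"] by simp
  qed
  have ILv: "IL = (1/L^3) * (GL (1/2) - GL 0)" unfolding IL_def using hIL by (rule integral_unique)
  have IRv: "IR = (-1/L^3) * (GR (1/2) - GR 0)" unfolding IR_def using hIR by (rule integral_unique)
  have m1: "a + 1/2 * L = (a+b)/2" and m2: "b + 1/2 * (-L) = (a+b)/2" unfolding L_def by (auto simp: field_simps)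
  have Fa: "F a = 0" unfolding F_def by simp
  have Fb: "F b = integral {a..b} f" unfolding F_def by simp
  have kv: "k 0 = 0" "k (1/2) = 0" "k1 0 = 0" "k1 (1/2) = -1/4" "k2 0 = 1" "k2 (1/2) = -2"
    by (simp_all add: k_def k1_def k2_def power2_eq_square power3_eq_cube)
  have key: "integral {a..b} f - L / 6 * (f a + 4 * f ((a + b) / 2) + f b) = L^4/6 * (IL - IR)"
    unfolding ILv IRv GL_def GR_def m1 m2 using L0
    apply (simp add: kv Fa Fb field_simps)
    apply algebra
    done
  have bL: "\<bar>IL\<bar> \<le> B * I1 + A * I2"
  proof -
    have "norm IL \<le> integral {0..1/2} (\<lambda>t. B * g1 t + A * g2 t)"
      unfolding IL_def
    proof (rule integral_norm_bound_integral)
      show "(\<lambda>t. k t * f3 (a + t*L)) integrable_on {0..1/2}" using hIL by blast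
      show "(\<lambda>t. B * g1 t + A * g2 t) integrable_on {0..1/2}" using comb1 by blast
      fix t :: real assume t: "t \<in> {0..1/2}"
      have t01: "t \<in> {0..1}" using t by auto
      have "a + t*L = t * b + (1 - t) * a" unfolding L_def by (simp add: algebra_simps)
      then have "\<bar>f3 (a + t*L)\<bar> \<le> h t * B + h (1 - t) * A"
        using hc[OF abin(2) abin(1) t01] unfolding A_def B_def by simp
      then have "k t * \<bar>f3 (a + t*L)\<bar> \<le> k t * (h t * B + h (1 - t) * A)"
        using knn[OF t] by (rule mult_left_mono)
      then show "norm (k t * f3 (a + t*L)) \<le> B * g1 t + A * g2 t"
        using knn[OF t] unfolding g1_def g2_def kk[symmetric] by (simp add: abs_mult algebra_simps)
    qed
    then show ?thesis using integral_unique[OF comb1] by simp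
  qed
  have bR: "\<bar>IR\<bar> \<le> B * I2 + A * I1"
  proof -
    have "norm IR \<le> integral {0..1/2} (\<lambda>t. B * g2 t + A * g1 t)"
      unfolding IR_def
    proof (rule integral_norm_bound_integral)
      show "(\<lambda>t. k t * f3 (b + t*(-L))) integrable_on {0..1/2}" using hIR by blast
      show "(\<lambda>t. B * g2 t + A * g1 t) integrable_on {0..1/2}" using comb2 by blast
      fix t :: real assume t: "t \<in> {0..1/2}"
      have t01: "1 - t \<in> {0..1}" using t by auto
      have "b + t*(-L) = (1 - t) * b + (1 - (1 - t)) * a" unfolding L_def by (simp add: algebra_simps)
      then have "\<bar>f3 (b + t*(-L))\<bar> \<le> h (1 - t) * B + h t * A"
        using hc[OF abin(2) abin(1) t01] unfolding A_def B_def by simp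
      then have "k t * \<bar>f3 (b + t*(-L))\<bar> \<le> k t * (h (1 - t) * B + h t * A)"
        using knn[OF t] by (rule mult_left_mono)
      then show "norm (k t * f3 (b + t*(-L))) \<le> B * g2 t + A * g1 t"
        using knn[OF t] unfolding g1_def g2_def kk[symmetric] by (simp add: abs_mult algebra_simps)
    qed
    then show ?thesis using integral_unique[OF comb2] by simp
  qed
  have "\<bar>integral {a..b} f - L / 6 * (f a + 4 * f ((a + b) / 2) + f b)\<bar> = L^4/6 * \<bar>IL - IR\<bar>"
    unfolding key using L0 by (simp add: abs_mult)
  also have "\<dots> \<le> L^4/6 * (\<bar>IL\<bar> + \<bar>IR\<bar>)"
    using L0 by (intro mult_left_mono) auto
  also have "\<dots> \<le> L^4/6 * ((B * I1 + A * I2) + (B * I2 + A * I1))"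
    using L0 bL bR by (intro mult_left_mono) auto
  also have "\<dots> = L^4/6 * (I1 + I2) * (A + B)" by (simp add: algebra_simps)
  finally show ?thesis unfolding L_def A_def B_def I1_def I2_def g1_def g2_def by simp
qed

end
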